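(* Let $T$ be a spanning tree of $K_n$. For each edge $e$ of $T$, let $A_e$ be the event that $e$ is an edge of a spanning tree of $K_n$ drawn uniformly at random. Then the line graph $\mathcal{L}(T)$ is a negative dependency graph for the events $\{A_e\}_{e \in T}$.
   Context: Given events $A_1,\dots,A_N$, a negative dependency graph is a simple graph $G=([N],E)$ such that for all $i\in[N]$ and all $S\subseteq\{j\in[N] : \{i,j\}\notin E\}$, if $\Pr[\bigwedge_{j\in S}\bar A_j]\neq 0$ then $\Pr[A_i \mid \bigwedge_{j\in S}\bar A_j]\le \Pr[A_i]$ (here the events are indexed by the edges of $T$). The line graph $\mathcal{L}(T)$ has vertex set the edges of $T$, two edges adjacent if they share an endpoint. *)

theory Defs
  imports "HOL-Probability.Probability"
begin

(* Graphs on vertex set {0..<n}; an edge is a 2-element set of vertices. *)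

definition complete_graph_edges :: "nat \<Rightarrow> nat set set" where
  "complete_graph_edges n = {e. \<exists>u v. u < n \<and> v < n \<and> u \<noteq> v \<and> e = {u, v}}"

definition adj :: "nat set set \<Rightarrow> nat \<Rightarrow> nat \<Rightarrow> bool" where
  "adj F u v \<longleftrightarrow> u \<noteq> v \<and> {u, v} \<in> F"

definition is_cycle :: "nat set set \<Rightarrow> nat list \<Rightarrow> bool" where
  "is_cycle F vs \<longleftrightarrow> length vs \<ge> 3 \<and> distinct vs
     \<and> (\<forall>i. Suc i < length vs \<longrightarrow> adj F (vs ! i) (vs ! Suc i))
     \<and> adj F (last vs) (hd vs)"

definition acyclic_edges :: "nat set set \<Rightarrow> bool" where
  "acyclic_edges F \<longleftrightarrow> \<not> (\<exists>vs. is_cycle F vs)"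

definition connected_on :: "nat set \<Rightarrow> nat set set \<Rightarrow> bool" where
  "connected_on V F \<longleftrightarrow> (\<forall>u\<in>V. \<forall>v\<in>V. (adj F)\<^sup>*\<^sup>* u v)"

definition spanning_tree :: "nat \<Rightarrow> nat set set \<Rightarrow> bool" where
  "spanning_tree n T \<longleftrightarrow> T \<subseteq> complete_graph_edges n
     \<and> connected_on {0..<n} T \<and> acyclic_edges T"

definition spanning_trees :: "nat \<Rightarrow> nat set set set" where
  "spanning_trees n = {T. spanning_tree n T}"

definition UST :: "nat \<Rightarrow> nat set set pmf" where
  "UST n = pmf_of_set (spanning_trees n)"

definition line_graph :: "nat set set \<Rightarrow> nat set \<Rightarrow> nat set \<Rightarrow> bool" where
  "line_graph T e f \<longleftrightarrow> e \<in> T \<and> f \<in> T \<and> e \<noteq> f \<and> e \<inter> f \<noteq> {}"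

definition neg_dep_graph ::
    "'a measure \<Rightarrow> 'i set \<Rightarrow> ('i \<Rightarrow> 'a set) \<Rightarrow> ('i \<Rightarrow> 'i \<Rightarrow> bool) \<Rightarrow> bool" where
  "neg_dep_graph M I A G \<longleftrightarrow>
     (\<forall>i\<in>I. \<not> G i i) \<and> (\<forall>i\<in>I. \<forall>j\<in>I. G i j \<longleftrightarrow> G j i) \<and>
     (\<forall>i\<in>I. \<forall>S. S \<subseteq> {j\<in>I. \<not> G i j} \<longrightarrow>
        (let B = space M \<inter> (\<Inter>j\<in>S. space M - A j) in
           measure M B \<noteq> 0 \<longrightarrow> measure M (A i \<inter> B) / measure M B \<le> measure M (A i)))"

end

theory Submission
  imports Defs
begin


lemma adj_sym: "adj F u v = adj F v u" by (auto simp: adj_def insert_commute)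

lemma adj_mono: "F \<subseteq> G \<Longrightarrow> adj F u v \<Longrightarrow> adj G u v" by (auto simp: adj_def)

lemma conn_sym: "(adj F)\<^sup>*\<^sup>* u v \<Longrightarrow> (adj F)\<^sup>*\<^sup>* v u"
proof (induction rule: rtranclp_induct)
  case base then show ?case by simp
next
  case (step y z)
  then show ?case using adj_sym converse_rtranclp_into_rtranclp by metis
qed

lemma conn_mono: assumes "F \<subseteq> G" "(adj F)\<^sup>*\<^sup>* u v" shows "(adj G)\<^sup>*\<^sup>* u v"
  using assms(2) by (induction rule: rtranclp_induct) (auto intro: rtranclp.rtrancl_into_rtrancl adj_mono[OF assms(1)])

lemma conn_insert:
  assumes "(adj (insert {p,q} F))\<^sup>*\<^sup>* u v"
  shows "(adj F)\<^sup>*\<^sup>* u v \<or> ((adj F)\<^sup>*\<^sup>* u p \<and> (adj F)\<^sup>*\<^sup>* q v) \<or> ((adj F)\<^sup>*\<^sup>* u q \<and> (adj F)\<^sup>*\<^sup>* p v)"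
  using assms
proof (induction rule: rtranclp_induct)
  case base
  then show ?case by simp
next
  case (step y z)
  show ?case
  proof (cases "{y,z} \<in> F")
    case True
    then have "adj F y z" using step(2) by (auto simp: adj_def)
    then show ?thesis using step(3) by (meson rtranclp.rtrancl_into_rtrancl)
  next
    case False
    then have "(y = p \<and> z = q) \<or> (y = q \<and> z = p)" using step(2) by (auto simp: adj_def doubleton_eq_iff)
    then show ?thesis using step(3) by auto
  qed
qed

definition walk :: "nat set set \<Rightarrow> nat list \<Rightarrow> bool" where
  "walk F vs \<longleftrightarrow> (\<forall>i. Suc i < length vs \<longrightarrow> adj F (vs ! i) (vs ! Suc i))"

lemma walk_exists:
  assumes "(adj F)\<^sup>*\<^sup>* u v"
  shows "\<exists>vs. vs \<noteq> [] \<and> hd vs = u \<and> last vs = v \<and> distinct vs \<and> walk F vs"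
  using assms
proof (induction rule: rtranclp_induct)
  case base
  then show ?case by (intro exI[of _ "[u]"]) (auto simp: walk_def)
next
  case (step y z)
  then obtain vs where vs: "vs \<noteq> []" "hd vs = u" "last vs = y" "distinct vs" "walk F vs" by blast
  show ?case
  proof (cases "z \<in> set vs")
    case True
    then obtain k where k: "k < length vs" "vs ! k = z" by (auto simp: in_set_conv_nth)
    let ?ws = "take (Suc k) vs"
    have "?ws \<noteq> []" using vs(1) by simp
    moreover have "hd ?ws = u" using vs(1,2) by (simp add: hd_take)
    moreover have "last ?ws = z" using k by (simp add: take_Suc_conv_app_nth)
    moreover have "distinct ?ws" using vs(4) by simp
    moreover have "walk F ?ws" using vs(5) k(1) by (auto simp: walk_def)
    ultimately show ?thesis by blast
  next
    case False
    let ?ws = "vs @ [z]"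
    have "walk F ?ws" unfolding walk_def
    proof (intro allI impI)
      fix i assume i: "Suc i < length ?ws"
      show "adj F (?ws ! i) (?ws ! Suc i)"
      proof (cases "Suc i < length vs")
        case True
        then show ?thesis using vs(5) by (simp add: walk_def nth_append)
      next
        case False
        then have "i = length vs - 1" using i by simp
        then have "?ws ! i = y" "?ws ! Suc i = z" using vs(1,3) False i
          by (auto simp: nth_append last_conv_nth)
        then show ?thesis using step(2) by simp
      qed
    qed
    then show ?thesis using vs False by (intro exI[of _ ?ws]) auto
  qed
qed

lemma chain:
  assumes "\<forall>m. i \<le> m \<and> m < j \<longrightarrow> adj F (vs!m) (vs!Suc m)" "i \<le> j"
  shows "(adj F)\<^sup>*\<^sup>* (vs!i) (vs!j)"
  using assms
proof (induction j)
  case 0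
  then show ?case by simp
next
  case (Suc j)
  show ?case
  proof (cases "i = Suc j")
    case True then show ?thesis by simp
  next
    case False
    then have "(adj F)\<^sup>*\<^sup>* (vs!i) (vs!j)" using Suc by auto
    moreover have "adj F (vs!j) (vs!Suc j)" using Suc.prems False by auto
    ultimately show ?thesis by (meson rtranclp.rtrancl_into_rtrancl)
  qed
qed

lemma pair_eq:
  assumes "distinct vs" "Suc m < length vs" "Suc k < length vs"
    "{vs!m, vs!Suc m} = {vs!k, vs!Suc k}"
  shows "m = k"
  using assms by (auto simp: doubleton_eq_iff nth_eq_iff_index_eq)

lemma pair_ne_last:
  assumes "distinct vs" "Suc m < length vs" "length vs \<ge> 3"
  shows "{vs!m, vs!Suc m} \<noteq> {last vs, hd vs}"
proof
  assume h: "{vs!m, vs!Suc m} = {last vs, hd vs}"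
  have ne: "vs \<noteq> []" using assms by auto
  have "last vs = vs ! (length vs - 1)" "hd vs = vs ! 0" using ne by (auto simp: last_conv_nth hd_conv_nth)
  moreover have "length vs - 1 < length vs" "0 < length vs" "Suc m < length vs" "m < length vs" using assms by auto
  ultimately show False using h assms(1,3) by (auto simp: doubleton_eq_iff nth_eq_iff_index_eq)
qed

lemma is_cycle_mono: "F \<subseteq> G \<Longrightarrow> is_cycle F vs \<Longrightarrow> is_cycle G vs"
  by (auto simp: is_cycle_def intro: adj_mono)

lemma acyclic_mono: "F \<subseteq> G \<Longrightarrow> acyclic_edges G \<Longrightarrow> acyclic_edges F"
  by (auto simp: acyclic_edges_def intro: is_cycle_mono)

lemma no_bypass:
  assumes "acyclic_edges T" "{u,v} \<in> T" "u \<noteq> v"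
  shows "\<not> (adj (T - {{u,v}}))\<^sup>*\<^sup>* u v"
proof
  assume "(adj (T - {{u,v}}))\<^sup>*\<^sup>* u v"
  then obtain vs where vs: "vs \<noteq> []" "hd vs = u" "last vs = v" "distinct vs" "walk (T - {{u,v}}) vs"
    using walk_exists by blast
  have h0: "hd vs = vs ! 0" and hl: "last vs = vs ! (length vs - 1)" using vs(1) by (auto simp: hd_conv_nth last_conv_nth)
  have "length vs \<noteq> 1" using vs h0 hl assms(3) by auto
  moreover have "length vs \<noteq> 2"
  proof
    assume "length vs = 2"
    then have "adj (T - {{u,v}}) (vs!0) (vs!1)" using vs(5) by (auto simp: walk_def)
    then show False using h0 hl vs \<open>length vs = 2\<close> by (auto simp: adj_def)
  qed
  moreover have "length vs \<noteq> 0" using vs(1) by simp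
  ultimately have "length vs \<ge> 3" by linarith
  moreover have "walk T vs" using vs(5) by (auto simp: walk_def intro: adj_mono[of "T - {{u,v}}" T])
  moreover have "adj T (last vs) (hd vs)" using vs assms by (auto simp: adj_def insert_commute)
  ultimately have "is_cycle T vs" using vs(4) by (auto simp: is_cycle_def walk_def)
  then show False using assms(1) by (auto simp: acyclic_edges_def)
qed



lemma acyclic_add:
  assumes acyc: "acyclic_edges F" and nc: "\<not> (adj F)\<^sup>*\<^sup>* u v" and uv: "u \<noteq> v"
  shows "acyclic_edges (insert {u,v} F)"
proof (rule ccontr)
  assume "\<not> acyclic_edges (insert {u,v} F)"
  then obtain vs where cyc: "is_cycle (insert {u,v} F) vs" by (auto simp: acyclic_edges_def)
  let ?L = "length vs"
  let ?G = "insert {u,v} F"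
  have L3: "?L \<ge> 3" and dist: "distinct vs" and
    w: "\<And>i. Suc i < ?L \<Longrightarrow> adj ?G (vs!i) (vs!Suc i)" and lh: "adj ?G (last vs) (hd vs)"
    using cyc by (auto simp: is_cycle_def)
  have ne: "vs \<noteq> []" using L3 by auto
  have h0: "hd vs = vs ! 0" and hl: "last vs = vs ! (?L - 1)" using ne by (auto simp: hd_conv_nth last_conv_nth)
  have red: "adj F x y" if "adj ?G x y" "{x,y} \<noteq> {u,v}" for x y
    using that by (auto simp: adj_def)
  have uvsym: "(adj F)\<^sup>*\<^sup>* x y \<Longrightarrow> {x,y} = {u,v} \<Longrightarrow> False" for x y
    using nc conn_sym by (auto simp: doubleton_eq_iff)
  show False
  proof (cases "\<exists>k. Suc k < ?L \<and> {vs!k, vs!Suc k} = {u,v}")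
    case True
    then obtain k where k: "Suc k < ?L" "{vs!k, vs!Suc k} = {u,v}" by blast
    have oth: "adj F (vs!m) (vs!Suc m)" if "Suc m < ?L" "m \<noteq> k" for m
      using red[OF w[OF that(1)]] pair_eq[OF dist that(1) k(1)] k(2) that(2) by metis
    have lhF: "adj F (last vs) (hd vs)"
      using red[OF lh] pair_ne_last[OF dist k(1) L3] k(2) by (metis insert_commute)
    have c1: "(adj F)\<^sup>*\<^sup>* (vs!0) (vs!k)"
      by (rule chain) (use oth k in auto)
    have c2: "(adj F)\<^sup>*\<^sup>* (vs!Suc k) (vs!(?L - 1))"
      by (rule chain) (use oth k in auto)
    have "(adj F)\<^sup>*\<^sup>* (vs!Suc k) (vs!k)"
      using c1 c2 lhF h0 hl by (metis converse_rtranclp_into_rtranclp rtranclp_trans)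
    then show False using uvsym k(2) by (metis insert_commute)
  next
    case False
    have all: "adj F (vs!m) (vs!Suc m)" if "Suc m < ?L" for m
      using red[OF w[OF that]] False that by blast
    have lhe: "{last vs, hd vs} = {u,v}"
    proof (rule ccontr)
      assume "{last vs, hd vs} \<noteq> {u,v}"
      then have "is_cycle F vs" using cyc all red[OF lh] by (auto simp: is_cycle_def)
      then show False using acyc by (auto simp: acyclic_edges_def)
    qed
    have "(adj F)\<^sup>*\<^sup>* (vs!0) (vs!(?L - 1))"
      by (rule chain) (use all L3 in auto)
    then show False using uvsym lhe h0 hl by (metis insert_commute)
  qed
qed



definition trees_av :: "nat \<Rightarrow> nat set set \<Rightarrow> nat set set set" where
  "trees_av n S = {T'. spanning_tree n T' \<and> T' \<inter> S = {}}"

lemma complete_mem: "{x,y} \<in> complete_graph_edges n \<longleftrightarrow> x < n \<and> y < n \<and> x \<noteq> y"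
  by (auto simp: complete_graph_edges_def doubleton_eq_iff)

lemma conn_to:
  assumes "\<forall>u<n. (adj F)\<^sup>*\<^sup>* u q"
  shows "connected_on {0..<n} F"
  unfolding connected_on_def using assms conn_sym by (metis atLeastLessThan_iff rtranclp_trans)

lemma split_tree:
  assumes "connected_on {0..<n} T" "{p,q} \<in> T" "u < n" "q < n"
  shows "(adj (T - {{p,q}}))\<^sup>*\<^sup>* u q \<or> (adj (T - {{p,q}}))\<^sup>*\<^sup>* u p"
proof -
  have "T = insert {p,q} (T - {{p,q}})" using assms(2) by auto
  moreover have "(adj T)\<^sup>*\<^sup>* u q" using assms by (auto simp: connected_on_def)
  ultimately have "(adj (insert {p,q} (T - {{p,q}})))\<^sup>*\<^sup>* u q" by simp
  from conn_insert[OF this] show ?thesis by auto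
qed

lemma bij_b:
  assumes pn: "p < n" and qn: "q < n" and pq: "p \<noteq> q" and Sav: "\<forall>e\<in>S. p \<notin> e \<and> q \<notin> e"
  shows "bij_betw (\<lambda>(T',x). insert {x,q} (T' - {{p,q}}))
    {(T',x). T' \<in> trees_av n S \<and> {p,q} \<in> T' \<and> x < n \<and> x \<noteq> p \<and> x \<noteq> q \<and> \<not> (adj (T' - {{p,q}}))\<^sup>*\<^sup>* x q}
    {T''\<in> trees_av n S. {p,q} \<notin> T''}"
proof -
  let ?f = "\<lambda>(T',x). insert {x,q} (T' - {{p,q}})"
  let ?P = "{(T',x). T' \<in> trees_av n S \<and> {p,q} \<in> T' \<and> x < n \<and> x \<noteq> p \<and> x \<noteq> q \<and> \<not> (adj (T' - {{p,q}}))\<^sup>*\<^sup>* x q}"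
  let ?O = "{T''\<in> trees_av n S. {p,q} \<notin> T''}"
  have xp_of: "(adj (T' - {{p,q}}))\<^sup>*\<^sup>* x p" if "(T',x) \<in> ?P" for T' x
    using that split_tree[of n T' p q x] qn by (auto simp: trees_av_def spanning_tree_def)
  have xq_notin: "{x,q} \<notin> T' - {{p,q}}" if "(T',x) \<in> ?P" for T' x
  proof
    assume "{x,q} \<in> T' - {{p,q}}"
    then have "adj (T' - {{p,q}}) x q" using that by (auto simp: adj_def)
    then have "(adj (T' - {{p,q}}))\<^sup>*\<^sup>* x q" by (rule r_into_rtranclp)
    with that show False by simp
  qed
  have into: "?f (T',x) \<in> ?O" if P: "(T',x) \<in> ?P" for T' x
  proof -
    let ?F = "T' - {{p,q}}"
    have st: "spanning_tree n T'" "T' \<inter> S = {}" "{p,q} \<in> T'" "x < n" "x \<noteq> p" "x \<noteq> q"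
      and nxq: "\<not> (adj ?F)\<^sup>*\<^sup>* x q" using P by (auto simp: trees_av_def)
    have xp: "(adj ?F)\<^sup>*\<^sup>* x p" using xp_of[OF P] .
    have sub: "insert {x,q} ?F \<subseteq> complete_graph_edges n"
      using st qn by (auto simp: spanning_tree_def complete_mem)
    have disj: "insert {x,q} ?F \<inter> S = {}" using st Sav by auto
    have nopq: "{p,q} \<notin> insert {x,q} ?F" using st pq by (auto simp: doubleton_eq_iff)
    have acF: "acyclic_edges ?F" using st acyclic_mono[of ?F T'] by (auto simp: spanning_tree_def)
    have ac: "acyclic_edges (insert {x,q} ?F)" using acyclic_add[OF acF nxq st(6)] .
    have conn: "\<forall>u<n. (adj (insert {x,q} ?F))\<^sup>*\<^sup>* u q"
    proof (intro allI impI)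
      fix u assume u: "u < n"
      have mono: "(adj ?F)\<^sup>*\<^sup>* a b \<Longrightarrow> (adj (insert {x,q} ?F))\<^sup>*\<^sup>* a b" for a b
        by (rule conn_mono[of ?F]) auto
      have e: "adj (insert {x,q} ?F) x q" using st by (auto simp: adj_def)
      have pq': "(adj (insert {x,q} ?F))\<^sup>*\<^sup>* p q"
        using mono[OF conn_sym[OF xp]] e by (meson rtranclp.rtrancl_into_rtrancl)
      from split_tree[of n T' p q u] st u qn
      consider "(adj ?F)\<^sup>*\<^sup>* u q" | "(adj ?F)\<^sup>*\<^sup>* u p" by (auto simp: spanning_tree_def)
      then show "(adj (insert {x,q} ?F))\<^sup>*\<^sup>* u q"
        by cases (use mono pq' in \<open>auto intro: rtranclp_trans\<close>)
    qed
    show ?thesis using sub disj nopq ac conn_to[OF conn]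
      by (auto simp: trees_av_def spanning_tree_def)
  qed
  have inj_aux: "T1 = T2 \<and> x1 = x2" if P1: "(T1,x1) \<in> ?P" and P2: "(T2,x2) \<in> ?P"
    and eq: "insert {x1,q} (T1 - {{p,q}}) = insert {x2,q} (T2 - {{p,q}})" for T1 x1 T2 x2
  proof -
    define T0 where "T0 = insert {x1,q} (T1 - {{p,q}})"
    have eq2: "T0 = insert {x2,q} (T2 - {{p,q}})" using eq unfolding T0_def .
    have F1: "T1 - {{p,q}} = T0 - {{x1,q}}" using xq_notin[OF P1] unfolding T0_def by auto
    have F2: "T2 - {{p,q}} = T0 - {{x2,q}}" using xq_notin[OF P2] unfolding eq2 by auto
    have T1: "T1 = insert {p,q} (T0 - {{x1,q}})" using F1 P1 by auto
    have T2: "T2 = insert {p,q} (T0 - {{x2,q}})" using F2 P2 by auto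
    have x12: "x1 = x2"
    proof (rule ccontr)
      assume ne: "x1 \<noteq> x2"
      define F0 where "F0 = T0 - {{x1,q},{x2,q}}"
      have ne2: "{x1,q} \<noteq> {x2,q}" using ne by (auto simp: doubleton_eq_iff)
      have x2in: "{x2,q} \<in> T0" unfolding eq2 by simp
      have x1in: "{x1,q} \<in> T0" unfolding T0_def by simp
      have G1: "T0 - {{x1,q}} = insert {x2,q} F0" using x2in ne2 unfolding F0_def by auto
      have n1: "\<not> (adj (T0 - {{x1,q}}))\<^sup>*\<^sup>* x1 q" using P1 F1 by auto
      have p1: "(adj (T0 - {{x1,q}}))\<^sup>*\<^sup>* x1 p" using xp_of[OF P1] F1 by simp
      have n2: "\<not> (adj (T0 - {{x2,q}}))\<^sup>*\<^sup>* x2 q" using P2 F2 by auto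
      have p2: "(adj (T0 - {{x2,q}}))\<^sup>*\<^sup>* x2 p" using xp_of[OF P2] F2 by simp
      have npq2: "\<not> (adj (T0 - {{x2,q}}))\<^sup>*\<^sup>* p q" using n2 p2 by (meson rtranclp_trans)
      have npq1: "\<not> (adj (T0 - {{x1,q}}))\<^sup>*\<^sup>* p q" using n1 p1 by (meson rtranclp_trans)
      have m1: "(adj F0)\<^sup>*\<^sup>* a b \<Longrightarrow> (adj (T0 - {{x1,q}}))\<^sup>*\<^sup>* a b" for a b
        by (rule conn_mono[of F0]) (auto simp: F0_def)
      have m2: "(adj F0)\<^sup>*\<^sup>* a b \<Longrightarrow> (adj (T0 - {{x2,q}}))\<^sup>*\<^sup>* a b" for a b
        by (rule conn_mono[of F0]) (auto simp: F0_def)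
      have e2: "adj (T0 - {{x2,q}}) x1 q" using x1in ne2 P1 by (auto simp: adj_def)
      have "(adj (insert {x2,q} F0))\<^sup>*\<^sup>* x1 p" using p1 G1 by simp
      from conn_insert[OF this]
      consider "(adj F0)\<^sup>*\<^sup>* x1 p" | "(adj F0)\<^sup>*\<^sup>* q p" | "(adj F0)\<^sup>*\<^sup>* x1 q" by blast
      then show False
      proof cases
        case 1
        then have "(adj (T0 - {{x2,q}}))\<^sup>*\<^sup>* p q"
          using m2[OF conn_sym[OF 1]] e2 by (meson rtranclp.rtrancl_into_rtrancl)
        then show False using npq2 by simp
      next
        case 2 then show False using npq1 m1 conn_sym by blast
      next
        case 3 then show False using n1 m1 by blast
      qed
    qed
    show ?thesis using T1 T2 x12 by simp
  qed
  have inj: "inj_on ?f ?P"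
  proof (rule inj_onI)
    fix a1 a2 assume a1: "a1 \<in> ?P" and a2: "a2 \<in> ?P" and eq: "?f a1 = ?f a2"
    obtain T1 x1 where a1e: "a1 = (T1,x1)" by (cases a1)
    obtain T2 x2 where a2e: "a2 = (T2,x2)" by (cases a2)
    show "a1 = a2" using inj_aux[of T1 x1 T2 x2] a1 a2 eq unfolding a1e a2e by simp
  qed
  have surj: "?O \<subseteq> ?f ` ?P"
  proof
    fix T'' assume O: "T'' \<in> ?O"
    have st: "spanning_tree n T''" "T'' \<inter> S = {}" "{p,q} \<notin> T''" using O by (auto simp: trees_av_def)
    have "(adj T'')\<^sup>*\<^sup>* p q" using st pn qn by (auto simp: spanning_tree_def connected_on_def)
    then obtain vs where vs: "vs \<noteq> []" "hd vs = p" "last vs = q" "distinct vs" "walk T'' vs"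
      using walk_exists by blast
    let ?L = "length vs"
    have h0: "hd vs = vs ! 0" and hl: "last vs = vs ! (?L - 1)" using vs(1) by (auto simp: hd_conv_nth last_conv_nth)
    have "?L \<noteq> 1" using vs h0 hl pq by auto
    moreover have "?L \<noteq> 2"
    proof
      assume "?L = 2"
      then have "adj T'' (vs!0) (vs!1)" using vs(5) by (auto simp: walk_def)
      then show False using h0 hl vs \<open>?L = 2\<close> st by (auto simp: adj_def)
    qed
    moreover have "?L \<noteq> 0" using vs(1) by simp
    ultimately have L3: "?L \<ge> 3" by linarith
    define x where "x = vs ! (?L - 2)"
    have Lx: "Suc (?L - 2) = ?L - 1" using L3 by simp
    have "Suc (?L - 2) < ?L" using L3 by simp
    then have "adj T'' (vs ! (?L - 2)) (vs ! Suc (?L - 2))" using vs(5) unfolding walk_def by blast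
    then have axq: "adj T'' x q" using Lx hl vs(3) unfolding x_def by simp
    have xq: "x \<noteq> q" using axq by (auto simp: adj_def)
    have xp: "x \<noteq> p"
    proof
      assume "x = p"
      then have "vs ! (?L - 2) = vs ! 0" using h0 vs(2) unfolding x_def by simp
      moreover have "?L - 2 < ?L" "0 < ?L" using L3 by auto
      ultimately have "?L - 2 = 0" using vs(4) nth_eq_iff_index_eq by blast
      then show False using L3 by simp
    qed
    have xqT: "{x,q} \<in> T''" using axq by (auto simp: adj_def)
    have xn: "x < n" using xqT st by (auto simp: spanning_tree_def complete_mem)
    let ?F = "T'' - {{x,q}}"
    have px: "(adj ?F)\<^sup>*\<^sup>* (vs!0) (vs!(?L - 2))"
    proof (rule chain)
      show "\<forall>m. 0 \<le> m \<and> m < ?L - 2 \<longrightarrow> adj ?F (vs ! m) (vs ! Suc m)"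
      proof (intro allI impI)
        fix m assume m: "0 \<le> m \<and> m < ?L - 2"
        have a: "adj T'' (vs ! m) (vs ! Suc m)" using vs(5) m by (auto simp: walk_def)
        have "{vs ! m, vs ! Suc m} \<noteq> {vs!(?L-2), vs!Suc (?L-2)}"
        proof
          assume "{vs ! m, vs ! Suc m} = {vs!(?L-2), vs!Suc (?L-2)}"
          moreover have "Suc m < ?L" "Suc (?L - 2) < ?L" using m L3 by auto
          ultimately have "m = ?L - 2" using pair_eq[OF vs(4)] by blast
          then show False using m by simp
        qed
        then have "{vs ! m, vs ! Suc m} \<noteq> {x,q}" using Lx hl vs(3) unfolding x_def by simp
        then show "adj ?F (vs ! m) (vs ! Suc m)" using a by (auto simp: adj_def)
      qed
    qed simp
    then have px: "(adj ?F)\<^sup>*\<^sup>* p x" using h0 vs(2) unfolding x_def by simp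
    have acT: "acyclic_edges T''" using st by (auto simp: spanning_tree_def)
    have nxq: "\<not> (adj ?F)\<^sup>*\<^sup>* x q" using no_bypass[OF acT xqT xq] .
    have npq: "\<not> (adj ?F)\<^sup>*\<^sup>* p q" using px nxq conn_sym by (meson rtranclp_trans)
    define T' where "T' = insert {p,q} ?F"
    have FT: "T' - {{p,q}} = ?F" using st unfolding T'_def by auto
    have acF: "acyclic_edges ?F" using acT acyclic_mono[of ?F T''] by auto
    have ac: "acyclic_edges T'" unfolding T'_def using acyclic_add[OF acF npq pq] .
    have sub: "T' \<subseteq> complete_graph_edges n" using st pn qn pq unfolding T'_def
      by (auto simp: spanning_tree_def complete_mem)
    have disj: "T' \<inter> S = {}" using st Sav unfolding T'_def by auto
    have conn: "\<forall>u<n. (adj T')\<^sup>*\<^sup>* u q"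
    proof (intro allI impI)
      fix u assume u: "u < n"
      have mono: "(adj ?F)\<^sup>*\<^sup>* a b \<Longrightarrow> (adj T')\<^sup>*\<^sup>* a b" for a b
        by (rule conn_mono[of ?F]) (auto simp: T'_def)
      have e: "adj T' p q" using pq by (auto simp: adj_def T'_def)
      have xq': "(adj T')\<^sup>*\<^sup>* x q"
        using mono[OF conn_sym[OF px]] e by (meson rtranclp.rtrancl_into_rtrancl)
      from split_tree[of n T'' x q u] st u qn xqT
      consider "(adj ?F)\<^sup>*\<^sup>* u q" | "(adj ?F)\<^sup>*\<^sup>* u x" by (auto simp: spanning_tree_def)
      then show "(adj T')\<^sup>*\<^sup>* u q"
        by cases (use mono xq' in \<open>auto intro: rtranclp_trans\<close>)
    qed
    have tT': "T' \<in> trees_av n S" using sub disj ac conn_to[OF conn]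
      by (auto simp: trees_av_def spanning_tree_def)
    have "{p,q} \<in> T'" unfolding T'_def by simp
    then have "(T',x) \<in> ?P" using tT' xn xp xq nxq FT by simp
    moreover have "?f (T',x) = T''" using FT xqT by auto
    ultimately show "T'' \<in> ?f ` ?P" by force
  qed
  show ?thesis unfolding bij_betw_def using inj into surj by auto
qed



lemma finite_trees_av: "finite (trees_av n S)"
proof -
  have "complete_graph_edges n \<subseteq> Pow {0..<n}" by (auto simp: complete_graph_edges_def)
  then have "finite (complete_graph_edges n)" by (meson finite_Pow_iff finite_atLeastLessThan finite_subset)
  moreover have "trees_av n S \<subseteq> Pow (complete_graph_edges n)" by (auto simp: trees_av_def spanning_tree_def)
  ultimately show ?thesis by (meson finite_Pow_iff finite_subset)
qed

lemma arith_aux: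
  fixes c d t n :: nat
  assumes "c * (n - 2) = 2 * d" "n \<ge> 2" "t = c + d"
  shows "n * c = 2 * t"
proof -
  obtain k where k: "n = k + 2" using assms(2) by (metis le_add_diff_inverse2)
  show ?thesis using assms(1,3) unfolding k by (simp add: algebra_simps)
qed

lemma count:
  assumes an: "a < n" and bn: "b < n" and ab: "a \<noteq> b" and Sav: "\<forall>e\<in>S. a \<notin> e \<and> b \<notin> e"
  shows "n * card {T'\<in>trees_av n S. {a,b} \<in> T'} = 2 * card (trees_av n S)"
proof -
  let ?Tr = "trees_av n S"
  let ?In = "{T'\<in>?Tr. {a,b} \<in> T'}"
  let ?Out = "{T'\<in>?Tr. {a,b} \<notin> T'}"
  have fin: "finite ?Tr" by (rule finite_trees_av)
  have cTr: "card ?Tr = card ?In + card ?Out"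
  proof -
    have "?Tr = ?In \<union> ?Out" by auto
    moreover have "card (?In \<union> ?Out) = card ?In + card ?Out"
      by (rule card_Un_disjoint) (use fin in auto)
    ultimately show ?thesis by simp
  qed
  let ?Pb = "{(T',x). T' \<in> ?Tr \<and> {a,b} \<in> T' \<and> x < n \<and> x \<noteq> a \<and> x \<noteq> b \<and> \<not> (adj (T' - {{a,b}}))\<^sup>*\<^sup>* x b}"
  let ?Pa = "{(T',x). T' \<in> ?Tr \<and> {b,a} \<in> T' \<and> x < n \<and> x \<noteq> b \<and> x \<noteq> a \<and> \<not> (adj (T' - {{b,a}}))\<^sup>*\<^sup>* x a}"
  have cb: "card ?Pb = card ?Out"
    using bij_betw_same_card[OF bij_b[OF an bn ab Sav]] .
  have ca0: "card ?Pa = card {T''\<in>?Tr. {b,a} \<notin> T''}"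
  proof -
    have Sav': "\<forall>e\<in>S. b \<notin> e \<and> a \<notin> e" using Sav by blast
    show ?thesis by (rule bij_betw_same_card[OF bij_b[OF bn an ab[symmetric] Sav']])
  qed
  have ba: "{b,a} = {a,b}" by (rule insert_commute)
  let ?Pa' = "{(T',x). T' \<in> ?Tr \<and> {a,b} \<in> T' \<and> x < n \<and> x \<noteq> b \<and> x \<noteq> a \<and> \<not> (adj (T' - {{a,b}}))\<^sup>*\<^sup>* x a}"
  have ca: "card ?Pa' = card ?Out" using ca0 unfolding ba .
  let ?All = "?In \<times> ({0..<n} - {a,b})"
  have cAll: "card ?All = card ?In * (n - 2)"
    using an bn ab by (simp add: card_cartesian_product card_Diff_subset numeral_2_eq_2)
  have PaPb: "?All = ?Pa' \<union> ?Pb"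
  proof
    show "?All \<subseteq> ?Pa' \<union> ?Pb"
    proof
      fix y assume y: "y \<in> ?All"
      obtain T' x where yx: "y = (T',x)" by (cases y)
      show "y \<in> ?Pa' \<union> ?Pb"
      proof (cases "(T',x) \<in> ?Pb")
        case True then show ?thesis using yx by simp
      next
        case nPb: False
        have T': "T' \<in> ?Tr" "{a,b} \<in> T'" and x: "x < n" "x \<noteq> a" "x \<noteq> b" using y yx by auto
        have "(adj (T' - {{a,b}}))\<^sup>*\<^sup>* x b" using nPb T' x by auto
        moreover have "\<not> (adj (T' - {{a,b}}))\<^sup>*\<^sup>* a b"
          using no_bypass[of T' a b] T' ab by (auto simp: trees_av_def spanning_tree_def)
        ultimately have "\<not> (adj (T' - {{a,b}}))\<^sup>*\<^sup>* x a" using conn_sym rtranclp_trans by metis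
        then have "(T', x) \<in> ?Pa'" using T' x by simp
        then show ?thesis using yx by simp
      qed
    qed
  next
    show "?Pa' \<union> ?Pb \<subseteq> ?All" by auto
  qed
  have disj: "?Pa' \<inter> ?Pb = {}"
  proof (rule ccontr)
    assume "?Pa' \<inter> ?Pb \<noteq> {}"
    then obtain T' x where "(T',x) \<in> ?Pa'" "(T',x) \<in> ?Pb" by auto
    then have h: "T' \<in> ?Tr" "{a,b} \<in> T'" "x < n" "\<not> (adj (T' - {{a,b}}))\<^sup>*\<^sup>* x b"
      "\<not> (adj (T' - {{a,b}}))\<^sup>*\<^sup>* x a" by auto
    then show False using split_tree[of n T' a b x] bn by (auto simp: trees_av_def spanning_tree_def)
  qed
  have finAll: "finite ?All" using fin by auto
  have f1: "finite ?Pa'" by (rule finite_subset[OF _ finAll]) (unfold PaPb, rule Un_upper1)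
  have f2: "finite ?Pb" by (rule finite_subset[OF _ finAll]) (unfold PaPb, rule Un_upper2)
  have "card ?All = card ?Pa' + card ?Pb"
    unfolding PaPb by (rule card_Un_disjoint[OF f1 f2 disj])
  then have "card ?In * (n - 2) = 2 * card ?Out" using cAll ca cb by simp
  moreover have "n \<ge> 2" using an bn ab by linarith
  ultimately show ?thesis using arith_aux cTr by blast
qed



theorem corollary3p4:
  fixes n :: nat and T :: "nat set set"
  assumes "spanning_tree n T"
  shows "neg_dep_graph (measure_pmf (UST n)) T (\<lambda>e. {T'. e \<in> T'}) (line_graph T)"
proof -
  let ?M = "measure_pmf (UST n)"
  let ?ST = "spanning_trees n"
  have STeq: "?ST = trees_av n {}" by (auto simp: spanning_trees_def trees_av_def)
  have finST: "finite ?ST" using finite_trees_av STeq by metis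
  have neST: "?ST \<noteq> {}" using assms by (auto simp: spanning_trees_def)
  have meas: "measure ?M X = card (?ST \<inter> X) / card ?ST" for X
    unfolding UST_def by (rule measure_pmf_of_set[OF neST finST])
  have main: "let B = space ?M \<inter> (\<Inter>j\<in>S. space ?M - {T'. j \<in> T'}) in
        measure ?M B \<noteq> 0 \<longrightarrow> measure ?M ({T'. i \<in> T'} \<inter> B) / measure ?M B \<le> measure ?M {T'. i \<in> T'}"
    if i: "i \<in> T" and S: "S \<subseteq> {j\<in>T. \<not> line_graph T i j}" for i S
  proof -
    have Beq: "space ?M \<inter> (\<Inter>j\<in>S. space ?M - {T'. j \<in> T'}) = {T'. T' \<inter> S = {}}" by auto
    have "i \<in> complete_graph_edges n" using i assms by (auto simp: spanning_tree_def)
    then obtain a b where ab: "i = {a,b}" "a < n" "b < n" "a \<noteq> b" by (auto simp: complete_graph_edges_def)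
    show ?thesis
    proof (cases "i \<in> S")
      case True
      then have "{T'. i \<in> T'} \<inter> {T'. T' \<inter> S = {}} = {}" by auto
      then show ?thesis unfolding Beq Let_def by simp
    next
      case False
      have Sav: "\<forall>e\<in>S. a \<notin> e \<and> b \<notin> e"
      proof
        fix e assume e: "e \<in> S"
        then have "e \<in> T" "\<not> line_graph T i e" using S by auto
        then have "i \<inter> e = {}" using i e False by (auto simp: line_graph_def)
        then show "a \<notin> e \<and> b \<notin> e" using ab by auto
      qed
      have c1: "n * card {T'\<in>trees_av n S. {a,b} \<in> T'} = 2 * card (trees_av n S)"
        by (rule count[OF ab(2,3,4) Sav])
      have c0: "n * card {T'\<in>trees_av n {}. {a,b} \<in> T'} = 2 * card (trees_av n {})"
        by (rule count[OF ab(2,3,4)]) simp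
      have e1: "?ST \<inter> {T'. T' \<inter> S = {}} = trees_av n S"
        by (auto simp: spanning_trees_def trees_av_def)
      have e2: "?ST \<inter> ({T'. i \<in> T'} \<inter> {T'. T' \<inter> S = {}}) = {T'\<in>trees_av n S. {a,b} \<in> T'}"
        using ab(1) by (auto simp: spanning_trees_def trees_av_def)
      have e3: "?ST \<inter> {T'. i \<in> T'} = {T'\<in>trees_av n {}. {a,b} \<in> T'}"
        using ab(1) by (auto simp: spanning_trees_def trees_av_def)
      have npos: "n > 0" using ab by auto
      have cST: "card ?ST > 0" using finST neST by (simp add: card_gt_0_iff)
      have r1: "real (card {T'\<in>trees_av n S. {a,b} \<in> T'}) / real (card (trees_av n S)) = 2 / real n"
        if "card (trees_av n S) \<noteq> 0"
      proof -
        have "real n * real (card {T'\<in>trees_av n S. {a,b} \<in> T'}) = 2 * real (card (trees_av n S))"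
          using c1 by (metis of_nat_mult of_nat_numeral)
        then show ?thesis using that npos by (simp add: field_simps)
      qed
      have r0: "real (card {T'\<in>trees_av n {}. {a,b} \<in> T'}) / real (card ?ST) = 2 / real n"
      proof -
        have "real n * real (card {T'\<in>trees_av n {}. {a,b} \<in> T'}) = 2 * real (card (trees_av n {}))"
          using c0 by (metis of_nat_mult of_nat_numeral)
        then show ?thesis using cST npos STeq by (simp add: field_simps)
      qed
      show ?thesis unfolding Beq Let_def
      proof
        assume nz: "measure ?M {T'. T' \<inter> S = {}} \<noteq> 0"
        then have nz': "card (trees_av n S) \<noteq> 0" unfolding meas e1 by auto
        have "measure ?M ({T'. i \<in> T'} \<inter> {T'. T' \<inter> S = {}}) / measure ?M {T'. T' \<inter> S = {}}
            = real (card {T'\<in>trees_av n S. {a,b} \<in> T'}) / real (card (trees_av n S))"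
          unfolding meas e1 e2 using cST by (simp add: field_simps)
        also have "\<dots> = 2 / real n" by (rule r1[OF nz'])
        also have "\<dots> = measure ?M {T'. i \<in> T'}" unfolding meas e3 using r0 by simp
        finally show "measure ?M ({T'. i \<in> T'} \<inter> {T'. T' \<inter> S = {}}) / measure ?M {T'. T' \<inter> S = {}}
            \<le> measure ?M {T'. i \<in> T'}" by simp
      qed
    qed
  qed
  show ?thesis unfolding neg_dep_graph_def
  proof (intro conjI)
    show "\<forall>i\<in>T. \<not> line_graph T i i" by (simp add: line_graph_def)
    show "\<forall>i\<in>T. \<forall>j\<in>T. line_graph T i j = line_graph T j i" by (auto simp: line_graph_def)
    show "\<forall>i\<in>T. \<forall>S. S \<subseteq> {j \<in> T. \<not> line_graph T i j} \<longrightarrow>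
      (let B = space ?M \<inter> (\<Inter>j\<in>S. space ?M - {T'. j \<in> T'}) in
        measure ?M B \<noteq> 0 \<longrightarrow> measure ?M ({T'. i \<in> T'} \<inter> B) / measure ?M B \<le> measure ?M {T'. i \<in> T'})"
      using main by blast
  qed
qed


end
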